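(* Let $C:\mathcal A\to\{0,1\}^+$ be the shortlex source code. For any $u\in\mathcal A$ with $K(u)=k$, we have $|C(u)|\in\{k-1,k\}$. Moreover, for every $k\ge2$, among the $S_k$ admissible strings of cost $k$, exactly $S_k/2$ receive a codeword of length $k-1$ and exactly $S_k/2$ receive a codeword of length $k$.
   Context: Let $\mathcal X=\{A,B,C,D\}$ and let $(X_i)_{i\ge1}$ be the first-order Markov chain on $\mathcal X$ with $\mathbb P(X_1=x)=1/4$ for all $x\in\mathcal X$ and transition probabilities: from $A$ go to $A$ or $C$ with probability $1/2$ each; from $B$ go to $B$ or $D$ with probability $1/2$ each; from $C$ and from $D$ go to each of $A,B,C,D$ with probability $1/4$. A nonempty finite string $x_1^n\in\mathcal X^n$ is admissible if every transition $x_i\to x_{i+1}$ ($1\le i\le n-1$) has positive probability; $\mathcal A\subset\mathcal X^+$ denotes the set of admissible nonempty strings. For $u=x_1^m\in\mathcal A$, the information cost is $K(u):=-\log_2\mathbb P(X_1^m=u)$, and $S_k:=\#\{u\in\mathcal A:K(u)=k\}$. Shortlex source code: order nonempty binary strings by length, then lexicographically, as $b_1,b_2,\dots$; order $\mathcal A$ as $u_1,u_2,\dots$ by increasing $K$, then increasing length, then lexicographically with $A<B<C<D$; set $C(u_j):=b_j$ (the code $C$ is not to be confused with the source symbol $C$). $|w|$ denotes the length of a binary string $w$. *)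

theory Defs
  imports Complex_Main
begin

datatype sym = SA | SB | SC | SD

fun sym_idx :: "sym \<Rightarrow> nat" where
  "sym_idx SA = 0" | "sym_idx SB = 1" | "sym_idx SC = 2" | "sym_idx SD = 3"

fun trans_p :: "sym \<Rightarrow> sym \<Rightarrow> real" where
  "trans_p SA y = (if y = SA \<or> y = SC then 1/2 else 0)"
| "trans_p SB y = (if y = SB \<or> y = SD then 1/2 else 0)"
| "trans_p SC y = 1/4"
| "trans_p SD y = 1/4"

fun chain_p :: "sym \<Rightarrow> sym list \<Rightarrow> real" where
  "chain_p x [] = 1"
| "chain_p x (y # ys) = trans_p x y * chain_p y ys"

text \<open>P(X_1^m = u) for u = x_1..x_m: uniform initial law times transitions.\<close>
fun path_prob :: "sym list \<Rightarrow> real" where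
  "path_prob [] = 1"
| "path_prob (x # xs) = 1/4 * chain_p x xs"

definition admissible :: "sym list set" where
  "admissible = {u. u \<noteq> [] \<and> (\<forall>i. Suc i < length u \<longrightarrow> trans_p (u ! i) (u ! Suc i) > 0)}"

definition info_cost :: "sym list \<Rightarrow> real" where
  "info_cost u = - log 2 (path_prob u)"

definition S_count :: "nat \<Rightarrow> nat" where
  "S_count k = card {u \<in> admissible. info_cost u = real k}"

text \<open>Lexicographic comparison (used for lists of equal length).\<close>
fun lex_lt :: "('a \<Rightarrow> nat) \<Rightarrow> 'a list \<Rightarrow> 'a list \<Rightarrow> bool" where
  "lex_lt f (x # xs) (y # ys) = (f x < f y \<or> (x = y \<and> lex_lt f xs ys))"
| "lex_lt f _ _ = False"

definition src_lt :: "sym list \<Rightarrow> sym list \<Rightarrow> bool" where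
  "src_lt v u = (info_cost v < info_cost u \<or>
     (info_cost v = info_cost u \<and> (length v < length u \<or>
        (length v = length u \<and> lex_lt sym_idx v u))))"

definition bit_idx :: "bool \<Rightarrow> nat" where
  "bit_idx b = (if b then 1 else 0)"

definition shortlex_lt :: "bool list \<Rightarrow> bool list \<Rightarrow> bool" where
  "shortlex_lt w' w = (length w' < length w \<or> (length w' = length w \<and> lex_lt bit_idx w' w))"

text \<open>Zero-based positions in the enumerations u_1,u_2,... and b_1,b_2,...\<close>
definition src_rank :: "sym list \<Rightarrow> nat" where
  "src_rank u = card {v \<in> admissible. src_lt v u}"

definition bin_rank :: "bool list \<Rightarrow> nat" where
  "bin_rank w = card {w'. w' \<noteq> [] \<and> shortlex_lt w' w}"

definition shortlex_code :: "sym list \<Rightarrow> bool list" where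
  "shortlex_code u = (THE w. w \<noteq> [] \<and> bin_rank w = src_rank u)"

end

theory Submission
  imports Defs
begin


lemma UNIV_sym: "(UNIV :: sym set) = {SA,SB,SC,SD}"
  using sym.exhaust by auto

instance sym :: finite
  by standard (simp add: UNIV_sym)

fun tc :: "sym \<Rightarrow> nat" where
  "tc SA = 1" | "tc SB = 1" | "tc SC = 2" | "tc SD = 2"

fun cc :: "sym \<Rightarrow> sym list \<Rightarrow> nat" where
  "cc x [] = 0" | "cc x (y # ys) = tc x + cc y ys"

fun okc :: "sym \<Rightarrow> sym list \<Rightarrow> bool" where
  "okc x [] = True" | "okc x (y # ys) = (trans_p x y > 0 \<and> okc y ys)"

lemma tc_pos: "tc x \<ge> 1" by (cases x) auto

lemma trans_val: "trans_p x y > 0 \<Longrightarrow> trans_p x y = (1/2) ^ tc x"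
  by (cases x; cases y) (auto simp: power2_eq_square)

lemma chain_val: "okc x ys \<Longrightarrow> chain_p x ys = (1/2) ^ cc x ys"
  by (induction ys arbitrary: x) (auto simp: trans_val power_add)

lemma len_cc: "length ys \<le> cc x ys"
  by (induction ys arbitrary: x) (simp_all, metis tc_pos add_mono Suc_eq_plus1 add.commute)

lemma okc_iff: "okc x ys \<longleftrightarrow> (\<forall>i. Suc i < length (x # ys) \<longrightarrow> trans_p ((x # ys) ! i) ((x # ys) ! Suc i) > 0)"
proof (induction ys arbitrary: x)
  case Nil then show ?case by simp
next
  case (Cons y ys)
  show ?case
  proof
    assume h: "okc x (y # ys)"
    show "\<forall>i. Suc i < length (x # y # ys) \<longrightarrow> trans_p ((x # y # ys) ! i) ((x # y # ys) ! Suc i) > 0"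
    proof (intro allI impI)
      fix i assume i: "Suc i < length (x # y # ys)"
      show "trans_p ((x # y # ys) ! i) ((x # y # ys) ! Suc i) > 0"
      proof (cases i)
        case 0 then show ?thesis using h by simp
      next
        case (Suc j) then show ?thesis using h i Cons.IH[of y] by auto
      qed
    qed
  next
    assume h: "\<forall>i. Suc i < length (x # y # ys) \<longrightarrow> trans_p ((x # y # ys) ! i) ((x # y # ys) ! Suc i) > 0"
    have "trans_p x y > 0" using h[rule_format, of 0] by simp
    moreover have "okc y ys" unfolding Cons.IH
    proof (intro allI impI)
      fix i assume "Suc i < length (y # ys)"
      then show "trans_p ((y # ys) ! i) ((y # ys) ! Suc i) > 0" using h[rule_format, of "Suc i"] by simp
    qed
    ultimately show "okc x (y # ys)" by simp
  qed
qed

lemma adm_iff: "x # ys \<in> admissible \<longleftrightarrow> okc x ys"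
  unfolding admissible_def using okc_iff by auto

definition ncost :: "sym list \<Rightarrow> nat" where
  "ncost u = (case u of [] \<Rightarrow> 0 | x # ys \<Rightarrow> 2 + cc x ys)"

lemma info_cost_adm: assumes "u \<in> admissible" shows "info_cost u = real (ncost u)"
proof -
  obtain x ys where u: "u = x # ys" using assms unfolding admissible_def by (cases u) auto
  have ok: "okc x ys" using assms u adm_iff by simp
  have "path_prob u = 1 / 2 ^ (2 + cc x ys)"
    using chain_val[OF ok] u by (simp add: power_add power_divide)
  then have "info_cost u = - log 2 (1 / 2 ^ (2 + cc x ys))" unfolding info_cost_def by simp
  also have "\<dots> = log 2 (2 ^ (2 + cc x ys))" by (simp add: log_divide)
  also have "\<dots> = real (2 + cc x ys)" by (rule log_pow_cancel) auto
  finally show ?thesis unfolding ncost_def u by simp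
qed

definition F :: "nat \<Rightarrow> sym \<Rightarrow> sym list set" where
  "F k x = {ys. okc x ys \<and> cc x ys = k}"

abbreviation N :: "nat \<Rightarrow> sym \<Rightarrow> nat" where
  "N k x \<equiv> card (F k x)"

lemma F_fin: "finite (F k x)"
proof -
  have "F k x \<subseteq> {ys. set ys \<subseteq> UNIV \<and> length ys \<le> k}"
    unfolding F_def using len_cc by (auto intro: le_trans)
  moreover have "finite {ys. set ys \<subseteq> (UNIV :: sym set) \<and> length ys \<le> k}"
    by (rule finite_lists_length_le) simp
  ultimately show ?thesis by (rule finite_subset)
qed

lemma F_0: "F 0 x = {[]}"
proof -
  have "ys \<noteq> [] \<Longrightarrow> cc x ys \<noteq> 0" for ys using tc_pos[of x] by (cases ys) auto
  then show ?thesis unfolding F_def by force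
qed

lemma F_step: assumes "k > 0"
  shows "F k x = (if tc x \<le> k then (\<Union>y\<in>{y. trans_p x y > 0}. (#) y ` F (k - tc x) y) else {})"
proof -
  have "ys \<in> F k x \<longleftrightarrow> (\<exists>y zs. ys = y # zs \<and> trans_p x y > 0 \<and> tc x \<le> k \<and> zs \<in> F (k - tc x) y)" for ys
    using assms unfolding F_def by (cases ys) auto
  note ch = this
  show ?thesis
  proof (cases "tc x \<le> k")
    case True
    have "F k x = {ys. \<exists>y zs. ys = y # zs \<and> trans_p x y > 0 \<and> zs \<in> F (k - tc x) y}"
      using ch True by (intro set_eqI) simp
    also have "\<dots> = (\<Union>y\<in>{y. trans_p x y > 0}. (#) y ` F (k - tc x) y)" by auto
    finally show ?thesis using True by simp
  next
    case False
    have "F k x = {}" using ch False by (intro set_eqI) simp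
    then show ?thesis using False by simp
  qed
qed

lemma card_UN_cons:
  assumes "finite Y" "\<And>y. y \<in> Y \<Longrightarrow> finite (G y)"
  shows "card (\<Union>y\<in>Y. (#) y ` G y) = (\<Sum>y\<in>Y. card (G y))"
proof -
  have "card (\<Union>y\<in>Y. (#) y ` G y) = (\<Sum>y\<in>Y. card ((#) y ` G y))"
    by (rule card_UN_disjoint) (use assms in auto)
  also have "\<dots> = (\<Sum>y\<in>Y. card (G y))"
    by (rule sum.cong) (auto intro: card_image inj_onI)
  finally show ?thesis .
qed

lemma succ_A: "{y. trans_p SA y > 0} = {SA, SC}" by (rule set_eqI, case_tac x) auto
lemma succ_B: "{y. trans_p SB y > 0} = {SB, SD}" by (rule set_eqI, case_tac x) auto
lemma succ_C: "{y. trans_p SC y > 0} = {SA, SB, SC, SD}" by (rule set_eqI, case_tac x) auto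
lemma succ_D: "{y. trans_p SD y > 0} = {SA, SB, SC, SD}" by (rule set_eqI, case_tac x) auto

lemma N_step: assumes k: "k > 0" and t: "tc x \<le> k"
  shows "N k x = (\<Sum>y\<in>{y. trans_p x y > 0}. N (k - tc x) y)"
proof -
  have "F k x = (\<Union>y\<in>{y. trans_p x y > 0}. (#) y ` F (k - tc x) y)"
    using F_step[OF k, of x] by (simp only: if_P[OF t])
  then show ?thesis by (simp only:) (rule card_UN_cons, simp, simp add: F_fin)
qed

lemma N_0: "N 0 x = 1" by (simp add: F_0)

lemma N_A: "N (Suc k) SA = N k SA + N k SC"
  using N_step[of _ SA, unfolded succ_A] by simp
lemma N_B: "N (Suc k) SB = N k SB + N k SD"
  using N_step[of _ SB, unfolded succ_B] by simp
lemma N_C1: "N (Suc 0) SC = 0"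
  by (subst F_step) auto
lemma N_D1: "N (Suc 0) SD = 0"
  by (subst F_step) auto
lemma N_C: "N (Suc (Suc k)) SC = N k SA + N k SB + N k SC + N k SD"
  using N_step[of _ SC, unfolded succ_C] by simp
lemma N_D: "N (Suc (Suc k)) SD = N k SA + N k SB + N k SC + N k SD"
  using N_step[of _ SD, unfolded succ_D] by simp

lemma N_sym: "N k SB = N k SA \<and> N k SD = N k SC"
proof (induction k rule: less_induct)
  case (less k)
  show ?case
  proof (cases k)
    case 0 then show ?thesis by (simp add: N_0)
  next
    case (Suc j)
    note IHj = less[of j]
    show ?thesis
    proof (cases j)
      case 0 then show ?thesis using Suc IHj by (simp add: N_A N_B N_C1 N_D1)
    next
      case (Suc i)
      then show ?thesis using \<open>k = Suc j\<close> IHj by (simp add: N_A N_B N_C N_D)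
    qed
  qed
qed

definition a :: "nat \<Rightarrow> nat" where "a k = N k SA"
definition c :: "nat \<Rightarrow> nat" where "c k = N k SC"

lemma a0: "a 0 = 1" and c0: "c 0 = 1" and aS: "a (Suc k) = a k + c k"
  and c1: "c (Suc 0) = 0" and cSS: "c (Suc (Suc k)) = 2 * a k + 2 * c k"
  unfolding a_def c_def using N_sym[of k]
  by (simp_all add: N_0 N_A N_C1 N_C)

lemma a_sum: "a (Suc k) + a (Suc (Suc k)) = 2 ^ (Suc (Suc k))"
proof (induction k)
  case 0 then show ?case by (simp add: aS a0 c0 c1)
next
  case (Suc k)
  have "a (Suc (Suc (Suc k))) = a (Suc (Suc k)) + 2 * a (Suc k)"
    by (simp add: aS cSS)
  then show ?case using Suc by simp
qed

definition Cls :: "nat \<Rightarrow> sym list set" where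
  "Cls k = {u \<in> admissible. ncost u = k}"

lemma Cls_SS: "Cls (Suc (Suc k)) = (\<Union>x\<in>UNIV. (#) x ` F k x)"
proof -
  have "u \<in> Cls (Suc (Suc k)) \<longleftrightarrow> (\<exists>x ys. u = x # ys \<and> ys \<in> F k x)" for u
    unfolding Cls_def F_def admissible_def ncost_def
    by (cases u) (auto simp: okc_iff)
  then show ?thesis by blast
qed

lemma adm_ne: "u \<in> admissible \<Longrightarrow> u \<noteq> []"
  unfolding admissible_def by simp

lemma ncost_ge2: "u \<in> admissible \<Longrightarrow> ncost u \<ge> 2"
  using adm_ne[of u] by (cases u) (simp_all add: ncost_def)

lemma Cls_small: "k < 2 \<Longrightarrow> Cls k = {}"
  unfolding Cls_def using ncost_ge2 by fastforce

lemma Cls_fin: "finite (Cls k)"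
proof (cases "k < 2")
  case True then show ?thesis by (simp add: Cls_small)
next
  case False
  then obtain j where "k = Suc (Suc j)" by (intro that[of "k - 2"]) simp
  then show ?thesis by (simp add: Cls_SS F_fin)
qed

definition h :: "nat \<Rightarrow> nat" where "h k = (if k < 2 then 0 else a (k - 1))"

lemma card_Cls: "card (Cls k) = 2 * h k"
proof (cases "k < 2")
  case True then show ?thesis by (simp add: Cls_small h_def)
next
  case False
  then obtain j where k: "k = Suc (Suc j)" by (intro that[of "k - 2"]) simp
  have "card (Cls k) = (\<Sum>x\<in>UNIV. N j x)" unfolding k Cls_SS
    by (rule card_UN_cons) (auto simp: F_fin)
  also have "\<dots> = N j SA + N j SB + N j SC + N j SD" by (simp add: UNIV_sym)
  also have "\<dots> = 2 * h k" using N_sym[of j] by (simp add: k h_def N_A a_def c_def)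
  finally show ?thesis .
qed

lemma h_sum: "k \<ge> 1 \<Longrightarrow> h k + h (Suc k) = 2 ^ k"
proof -
  assume "k \<ge> 1"
  then consider "k = 1" | j where "k = Suc (Suc j)"
    by (cases "k = 1") (auto intro: that(2)[of "k - 2"])
  then show ?thesis
  proof cases
    case 1 then show ?thesis by (simp add: h_def aS a0 c0)
  next
    case 2 then show ?thesis using a_sum[of j] by (simp add: h_def)
  qed
qed



lemma lex_irrefl: "\<not> lex_lt f xs xs"
  by (induction xs) auto

lemma lex_trans: "lex_lt f xs ys \<Longrightarrow> lex_lt f ys zs \<Longrightarrow> lex_lt f xs zs"
proof (induction xs arbitrary: ys zs)
  case Nil then show ?case by simp
next
  case (Cons x xs)
  then obtain y ys' where y: "ys = y # ys'" by (cases ys) auto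
  with Cons obtain z zs' where z: "zs = z # zs'" by (cases zs) auto
  show ?case using Cons.prems Cons.IH[of ys' zs'] unfolding y z by auto
qed

lemma lex_total: "inj f \<Longrightarrow> length xs = length ys \<Longrightarrow> xs \<noteq> ys \<Longrightarrow> lex_lt f xs ys \<or> lex_lt f ys xs"
proof (induction xs arbitrary: ys)
  case Nil then show ?case by simp
next
  case (Cons x xs)
  then obtain y ys' where y: "ys = y # ys'" by (cases ys) auto
  show ?case
  proof (cases "x = y")
    case True then show ?thesis using Cons y by auto
  next
    case False then have "f x \<noteq> f y" using Cons.prems(1) by (meson injD)
    then show ?thesis unfolding y by auto
  qed
qed

lemma rank_bij:
  assumes fin: "finite A"
    and irr: "\<And>x. x \<in> A \<Longrightarrow> \<not> R x x"
    and tr: "\<And>x y z. x \<in> A \<Longrightarrow> y \<in> A \<Longrightarrow> z \<in> A \<Longrightarrow> R x y \<Longrightarrow> R y z \<Longrightarrow> R x z"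
    and tot: "\<And>x y. x \<in> A \<Longrightarrow> y \<in> A \<Longrightarrow> x \<noteq> y \<Longrightarrow> R x y \<or> R y x"
  shows "bij_betw (\<lambda>u. card {v \<in> A. R v u}) A {0..<card A}"
proof -
  let ?g = "\<lambda>u. card {v \<in> A. R v u}"
  have lt: "?g u < ?g w" if "u \<in> A" "w \<in> A" "R u w" for u w
  proof (rule psubset_card_mono)
    show "finite {v \<in> A. R v w}" using fin by simp
    show "{v \<in> A. R v u} \<subset> {v \<in> A. R v w}"
      using that irr tr by blast
  qed
  have inj: "inj_on ?g A"
  proof (rule inj_onI)
    fix u w assume "u \<in> A" "w \<in> A" "?g u = ?g w"
    then show "u = w" using tot[of u w] lt[of u w] lt[of w u] by fastforce
  qed
  have into: "?g ` A \<subseteq> {0..<card A}"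
  proof
    fix n assume "n \<in> ?g ` A"
    then obtain u where u: "u \<in> A" "n = ?g u" by blast
    have "{v \<in> A. R v u} \<subset> A" using u irr by blast
    then have "?g u < card A" using fin by (rule psubset_card_mono[rotated])
    then show "n \<in> {0..<card A}" using u by simp
  qed
  have "card (?g ` A) = card {0..<card A}" using card_image[OF inj] by simp
  then have "?g ` A = {0..<card A}" using card_subset_eq[OF _ into] by simp
  then show ?thesis using inj by (simp add: bij_betw_def)
qed

lemma bij_count:
  assumes "bij_betw g A B"
  shows "card {x \<in> A. P (g x)} = card {y \<in> B. P y}"
proof -
  have "bij_betw g {x \<in> A. P (g x)} {y \<in> B. P y}"
    using assms unfolding bij_betw_def inj_on_def by auto
  then show ?thesis by (rule bij_betw_same_card)
qed

fun bval :: "bool list \<Rightarrow> nat" where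
  "bval [] = 0"
| "bval (b # w) = (if b then 2 ^ length w else 0) + bval w"

lemma bval_lt: "bval w < 2 ^ length w"
  by (induction w) auto

lemma bval_inj: "length w = length w' \<Longrightarrow> bval w = bval w' \<Longrightarrow> w = w'"
proof (induction w arbitrary: w')
  case Nil then show ?case by simp
next
  case (Cons b w)
  then obtain c v where v: "w' = c # v" by (cases w') auto
  have "b = c" using Cons.prems bval_lt[of w] bval_lt[of v] unfolding v
    by (auto split: if_splits)
  then show ?case using Cons unfolding v by auto
qed

lemma lex_bval: "length w' = length w \<Longrightarrow> lex_lt bit_idx w' w \<longleftrightarrow> bval w' < bval w"
proof (induction w' arbitrary: w)
  case Nil then show ?case by simp
next
  case (Cons c v)
  then obtain b w0 where w: "w = b # w0" by (cases w) auto
  have l: "length v = length w0" using Cons.prems w by simp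
  show ?case using Cons.IH[OF l] bval_lt[of v] bval_lt[of w0] l unfolding w
    by (auto simp: bit_idx_def)
qed

lemma card_len: "card {w :: bool list. length w = n} = 2 ^ n"
  using card_lists_length_eq[of "UNIV :: bool set" n] by simp

lemma bval_bij: "bij_betw bval {w. length w = n} {0..<2 ^ n}"
proof -
  have inj: "inj_on bval {w. length w = n}" unfolding inj_on_def using bval_inj by auto
  have into: "bval ` {w. length w = n} \<subseteq> {0..<2 ^ n}" using bval_lt by auto
  have "card (bval ` {w. length w = n}) = card {0..<(2::nat) ^ n}"
    using card_image[OF inj] card_len by simp
  then have "bval ` {w. length w = n} = {0..<2 ^ n}" using card_subset_eq[OF _ into] by simp
  then show ?thesis using inj by (simp add: bij_betw_def)
qed

lemma card_lex: "card {w'. length w' = length w \<and> lex_lt bit_idx w' w} = bval w"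
proof -
  have "{w'. length w' = length w \<and> lex_lt bit_idx w' w} = {w' \<in> {w'. length w' = length w}. bval w' < bval w}"
    using lex_bval by auto
  then have "card {w'. length w' = length w \<and> lex_lt bit_idx w' w} = card {y \<in> {0..<2 ^ length w}. y < bval w}"
    using bij_count[OF bval_bij, where P="\<lambda>y. y < bval w"] by simp
  also have "{y \<in> {0..<2 ^ length w}. y < bval w} = {0..<bval w}" using bval_lt[of w] by auto
  finally show ?thesis by simp
qed

lemma card_short: "card {w' :: bool list. w' \<noteq> [] \<and> length w' < Suc n} + 2 = 2 ^ Suc n"
proof (induction n)
  case 0
  have "{w' :: bool list. w' \<noteq> [] \<and> length w' < Suc 0} = {}" by auto
  then show ?case by simp
next
  case (Suc n)
  have e: "{w' :: bool list. w' \<noteq> [] \<and> length w' < Suc (Suc n)} =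
      {w'. w' \<noteq> [] \<and> length w' < Suc n} \<union> {w'. length w' = Suc n}" by auto
  have f1: "finite {w' :: bool list. w' \<noteq> [] \<and> length w' < Suc n}"
    by (rule finite_subset[of _ "{w. set w \<subseteq> UNIV \<and> length w \<le> n}"], force, rule finite_lists_length_le, simp)
  have f2: "finite {w' :: bool list. length w' = Suc n}"
    using finite_lists_length_eq[of "UNIV :: bool set" "Suc n"] by simp
  have "card {w' :: bool list. w' \<noteq> [] \<and> length w' < Suc (Suc n)} =
      card {w' :: bool list. w' \<noteq> [] \<and> length w' < Suc n} + card {w' :: bool list. length w' = Suc n}"
    unfolding e by (rule card_Un_disjoint[OF f1 f2]) auto
  then show ?case using Suc card_len[of "Suc n"] by simp
qed

lemma bin_rank_eq: assumes "w \<noteq> []" shows "bin_rank w + 2 = 2 ^ length w + bval w"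
proof -
  obtain n where n: "length w = Suc n" using assms by (cases w) auto
  have e: "{w'. w' \<noteq> [] \<and> shortlex_lt w' w} =
     {w'. w' \<noteq> [] \<and> length w' < Suc n} \<union> {w'. length w' = length w \<and> lex_lt bit_idx w' w}"
    unfolding shortlex_lt_def n by (auto simp: lex_irrefl)
  have f1: "finite {w' :: bool list. w' \<noteq> [] \<and> length w' < Suc n}"
    by (rule finite_subset[of _ "{w. set w \<subseteq> UNIV \<and> length w \<le> n}"], force, rule finite_lists_length_le, simp)
  have f2: "finite {w'. length w' = length w \<and> lex_lt bit_idx w' w}"
    by (rule finite_subset[of _ "{w'. set w' \<subseteq> UNIV \<and> length w' = length w}"]) (force, rule finite_lists_length_eq, simp)
  have "bin_rank w = card {w' :: bool list. w' \<noteq> [] \<and> length w' < Suc n} + card {w'. length w' = length w \<and> lex_lt bit_idx w' w}"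
    unfolding bin_rank_def e using n by (intro card_Un_disjoint[OF f1 f2]) auto
  then show ?thesis using card_short[of n] card_lex[of w] n by simp
qed

lemma ex_log: "(m::nat) \<ge> 1 \<Longrightarrow> \<exists>L. 2 ^ L \<le> m \<and> m < 2 ^ Suc L"
proof (induction m rule: dec_induct)
  case base then show ?case by (intro exI[of _ 0]) simp
next
  case (step m)
  then obtain L where L: "2 ^ L \<le> m" "m < 2 ^ Suc L" by blast
  show ?case
  proof (cases "Suc m < 2 ^ Suc L")
    case True then show ?thesis using L by (intro exI[of _ L]) simp
  next
    case False then have "Suc m = 2 ^ Suc L" using L by simp
    then show ?thesis by (intro exI[of _ "Suc L"]) simp
  qed
qed

lemma len_unique:
  assumes "2 ^ n \<le> (m::nat)" "m < 2 ^ Suc n" "2 ^ n' \<le> m" "m < 2 ^ Suc n'"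
  shows "n = n'"
proof (rule ccontr)
  assume "n \<noteq> n'"
  then consider "Suc n \<le> n'" | "Suc n' \<le> n" by linarith
  then show False
  proof cases
    case 1 then have "(2::nat) ^ Suc n \<le> 2 ^ n'" by (rule power_increasing) simp
    then show False using assms by simp
  next
    case 2 then have "(2::nat) ^ Suc n' \<le> 2 ^ n" by (rule power_increasing) simp
    then show False using assms by simp
  qed
qed

lemma code_ex1: "\<exists>!w. w \<noteq> [] \<and> bin_rank w = r"
proof -
  obtain L where L: "2 ^ L \<le> r + 2" "r + 2 < 2 ^ Suc L" using ex_log[of "r + 2"] by auto
  have L1: "L \<ge> 1" using L by (cases L) auto
  have "r + 2 - 2 ^ L \<in> {0..<2 ^ L}" using L by auto
  then obtain w where w: "length w = L" "bval w = r + 2 - 2 ^ L"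
    using bval_bij[of L] unfolding bij_betw_def by (metis (mono_tags, lifting) imageE mem_Collect_eq)
  have wne: "w \<noteq> []" using w L1 by auto
  have "bin_rank w = r" using bin_rank_eq[OF wne] w L by simp
  moreover have "w' = w" if "w' \<noteq> []" "bin_rank w' = r" for w'
  proof -
    have e: "2 ^ length w' + bval w' = r + 2" using bin_rank_eq[OF that(1)] that(2) by simp
    have "length w' = L"
      using len_unique[of "length w'" "r + 2" L] e bval_lt[of w'] L by simp
    then show ?thesis using e w L by (intro bval_inj) auto
  qed
  ultimately show ?thesis using wne by blast
qed

lemma code_len: "2 ^ length (THE w. w \<noteq> [] \<and> bin_rank w = r) \<le> r + 2 \<and>
   r + 2 < 2 ^ Suc (length (THE w. w \<noteq> [] \<and> bin_rank w = r))"
proof -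
  let ?w = "THE w. w \<noteq> [] \<and> bin_rank w = r"
  have "?w \<noteq> [] \<and> bin_rank ?w = r" by (rule theI'[OF code_ex1])
  then show ?thesis using bin_rank_eq[of ?w] bval_lt[of ?w] by auto
qed



definition ll :: "sym list \<Rightarrow> sym list \<Rightarrow> bool" where
  "ll v u = (length v < length u \<or> (length v = length u \<and> lex_lt sym_idx v u))"

definition pos :: "nat \<Rightarrow> sym list \<Rightarrow> nat" where
  "pos k u = card {v \<in> Cls k. ll v u}"

lemma inj_sym_idx: "inj sym_idx"
proof (rule injI)
  fix x y show "sym_idx x = sym_idx y \<Longrightarrow> x = y" by (cases x; cases y) auto
qed

lemma pos_bij: "bij_betw (pos k) (Cls k) {0..<2 * h k}"
proof -
  have "bij_betw (\<lambda>u. card {v \<in> Cls k. ll v u}) (Cls k) {0..<card (Cls k)}"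
  proof (rule rank_bij[OF Cls_fin])
    show "\<not> ll x x" for x by (simp add: ll_def lex_irrefl)
    show "ll x z" if "ll x y" "ll y z" for x y z
      using that lex_trans[of sym_idx x y z] unfolding ll_def by auto
    show "ll x y \<or> ll y x" if "x \<noteq> y" for x y
      using that lex_total[OF inj_sym_idx, of x y] unfolding ll_def by auto
  qed
  then show ?thesis unfolding pos_def card_Cls by simp
qed


lemma below_eq: "{v \<in> admissible. ncost v < k} = (\<Union>j\<in>{..<k}. Cls j)"
  unfolding Cls_def by auto

lemma Cls_disj: "i \<noteq> j \<Longrightarrow> Cls i \<inter> Cls j = {}"
  unfolding Cls_def by auto

lemma card_below: "card {v \<in> admissible. ncost v < k} = (\<Sum>j<k. card (Cls j))"
  unfolding below_eq by (rule card_UN_disjoint) (auto simp: Cls_fin Cls_disj)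

lemma sum_Cls: "k \<ge> 1 \<Longrightarrow> (\<Sum>j<Suc k. card (Cls j)) + 2 = 2 ^ k + h k"
proof (induction k rule: dec_induct)
  case base
  then show ?case by (simp add: card_Cls h_def)
next
  case (step k)
  have "(\<Sum>j<Suc (Suc k). card (Cls j)) + 2 = 2 ^ k + h k + 2 * h (Suc k)"
    using step.IH by (simp add: card_Cls)
  also have "\<dots> = 2 ^ Suc k + h (Suc k)" using h_sum[OF step.hyps(1)] by simp
  finally show ?case .
qed

lemma src_rank_eq: assumes u: "u \<in> Cls k"
  shows "src_rank u = card {v \<in> admissible. ncost v < k} + pos k u"
proof -
  have uk: "info_cost u = real k" "u \<in> admissible" using u info_cost_adm unfolding Cls_def by auto
  have e: "{v \<in> admissible. src_lt v u} = {v \<in> admissible. ncost v < k} \<union> {v \<in> Cls k. ll v u}"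
    unfolding src_lt_def Cls_def ll_def using uk info_cost_adm by auto
  have f1: "finite {v \<in> admissible. ncost v < k}" unfolding below_eq by (simp add: Cls_fin)
  have f2: "finite {v \<in> Cls k. ll v u}" using Cls_fin by simp
  show ?thesis unfolding src_rank_def pos_def e
    by (rule card_Un_disjoint[OF f1 f2]) (auto simp: Cls_def)
qed

lemma h_le: "k \<ge> 1 \<Longrightarrow> h k \<le> 2 ^ k"
  using h_sum[of k] by simp

lemma key:
  assumes u: "u \<in> Cls (Suc m)" and m: "m \<ge> 1"
  shows "(length (shortlex_code u) = m \<and> pos (Suc m) u < h (Suc m)) \<or>
         (length (shortlex_code u) = Suc m \<and> \<not> pos (Suc m) u < h (Suc m))"
proof -
  let ?r = "src_rank u" and ?p = "pos (Suc m) u" and ?L = "length (shortlex_code u)"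
  have p: "?p < 2 * h (Suc m)" using pos_bij[of "Suc m"] u unfolding bij_betw_def by auto
  have r: "?r + 2 = 2 ^ m + h m + ?p"
    using src_rank_eq[OF u] card_below[of "Suc m"] sum_Cls[OF m] by simp
  have hs: "h m + h (Suc m) = 2 ^ m" using h_sum[OF m] .
  have hl: "h (Suc m) \<le> 2 ^ Suc m" using h_le[of "Suc m"] by simp
  have L: "2 ^ ?L \<le> ?r + 2" "?r + 2 < 2 ^ Suc ?L"
    using code_len[of ?r] unfolding shortlex_code_def by auto
  show ?thesis
  proof (cases "?p < h (Suc m)")
    case True
    then have "2 ^ m \<le> ?r + 2" "?r + 2 < 2 ^ Suc m" using r hs by auto
    then have "?L = m" using len_unique L by blast
    then show ?thesis using True by simp
  next
    case False
    then have "2 ^ Suc m \<le> ?r + 2" "?r + 2 < 2 ^ Suc (Suc m)" using r hs hl p by auto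
    then have "?L = Suc m" using len_unique L by blast
    then show ?thesis using False by simp
  qed
qed

lemma cls_eq: "{u \<in> admissible. info_cost u = real k} = Cls k"
  unfolding Cls_def using info_cost_adm by auto

theorem mainTheorem5:
  shows "(\<forall>u k. u \<in> admissible \<and> info_cost u = real k \<longrightarrow>
            length (shortlex_code u) \<in> {k - 1, k})
       \<and> (\<forall>k::nat. k \<ge> 2 \<longrightarrow>
            real (card {u \<in> admissible. info_cost u = real k \<and> length (shortlex_code u) = k - 1})
              = real (S_count k) / 2
          \<and> real (card {u \<in> admissible. info_cost u = real k \<and> length (shortlex_code u) = k})
              = real (S_count k) / 2)"
proof (intro conjI allI impI)
  fix u k assume a: "u \<in> admissible \<and> info_cost u = real k"
  then have uc: "u \<in> Cls k" using cls_eq by blast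
  have "k \<ge> 2" using uc ncost_ge2 unfolding Cls_def by auto
  then obtain m where k: "k = Suc m" and m: "m \<ge> 1" by (intro that[of "k - 1"]) auto
  show "length (shortlex_code u) \<in> {k - 1, k}" using key[OF uc[unfolded k] m] k by auto
next
  fix k :: nat assume "k \<ge> 2"
  then obtain m where k: "k = Suc m" and m: "m \<ge> 1" by (intro that[of "k - 1"]) auto
  have S: "S_count k = 2 * h k" unfolding S_count_def cls_eq card_Cls ..
  have e1: "{u \<in> admissible. info_cost u = real k \<and> length (shortlex_code u) = k - 1} =
      {u \<in> Cls k. pos k u < h k}"
  proof -
    have "u \<in> Cls k \<Longrightarrow> length (shortlex_code u) = k - 1 \<longleftrightarrow> pos k u < h k" for u
      using key[of u m] m k by auto
    then show ?thesis using cls_eq[of k] by blast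
  qed
  have e2: "{u \<in> admissible. info_cost u = real k \<and> length (shortlex_code u) = k} =
      {u \<in> Cls k. \<not> pos k u < h k}"
  proof -
    have "u \<in> Cls k \<Longrightarrow> length (shortlex_code u) = k \<longleftrightarrow> \<not> pos k u < h k" for u
      using key[of u m] m k by auto
    then show ?thesis using cls_eq[of k] by blast
  qed
  have c1: "card {u \<in> Cls k. pos k u < h k} = h k"
  proof -
    have "card {u \<in> Cls k. pos k u < h k} = card {y \<in> {0..<2 * h k}. y < h k}"
      by (rule bij_count[OF pos_bij])
    also have "{y \<in> {0..<2 * h k}. y < h k} = {0..<h k}" by auto
    finally show ?thesis by simp
  qed
  have c2: "card {u \<in> Cls k. \<not> pos k u < h k} = h k"
  proof -
    have "card {u \<in> Cls k. \<not> pos k u < h k} = card {y \<in> {0..<2 * h k}. \<not> y < h k}"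
      by (rule bij_count[OF pos_bij])
    also have "{y \<in> {0..<2 * h k}. \<not> y < h k} = {h k..<2 * h k}" by auto
    finally show ?thesis by simp
  qed
  show "real (card {u \<in> admissible. info_cost u = real k \<and> length (shortlex_code u) = k - 1})
              = real (S_count k) / 2" unfolding e1 c1 S by simp
  show "real (card {u \<in> admissible. info_cost u = real k \<and> length (shortlex_code u) = k})
              = real (S_count k) / 2" unfolding e2 c2 S by simp
qed

end
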